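(* Let $A$ be an Archimedean semiprime $f$-algebra which is relatively uniformly complete. Then $A$ is bounded quasi-inversion closed, i.e., for every $a\in A$ with $|a|\le|a^2-a|$ there exists $a^\ast\in A$ with $a+a^\ast=aa^\ast$.
   Context: An $f$-algebra is a real associative algebra that is a vector lattice with $A_+A_+\subseteq A_+$ and such that $a\wedge b=0$ implies $ac\wedge b=ca\wedge b=0$ for all $c\in A_+$; it is semiprime if $0$ is its only nilpotent element. Relative uniform completeness is the standard notion for vector lattices. *)

theory Defs
  imports Complex_Main
begin

text \<open>Elements of a real vector lattice carrying an associative (not necessarily unital)
real algebra structure are modelled by a type of class
{real_algebra, ordered_real_vector, lattice}; the order is shared by all classes.\<close>

definition vabs :: "'a::{ordered_real_vector, lattice} \<Rightarrow> 'a" where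
  "vabs a = sup a (- a)"

definition archimedean_vl :: "'a::{ordered_real_vector, lattice} itself \<Rightarrow> bool" where
  "archimedean_vl _ \<longleftrightarrow>
     (\<forall>u v :: 'a. 0 \<le> u \<and> 0 \<le> v \<and> (\<forall>n::nat. real n *\<^sub>R u \<le> v) \<longrightarrow> u = 0)"

definition ru_converges :: "(nat \<Rightarrow> 'a::{ordered_real_vector, lattice}) \<Rightarrow> 'a \<Rightarrow> bool" where
  "ru_converges x l \<longleftrightarrow>
     (\<exists>e. 0 \<le> e \<and> (\<forall>\<epsilon>::real. \<epsilon> > 0 \<longrightarrow>
        (\<exists>N. \<forall>n\<ge>N. vabs (x n - l) \<le> \<epsilon> *\<^sub>R e)))"

definition ru_cauchy :: "(nat \<Rightarrow> 'a::{ordered_real_vector, lattice}) \<Rightarrow> bool" where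
  "ru_cauchy x \<longleftrightarrow>
     (\<exists>e. 0 \<le> e \<and> (\<forall>\<epsilon>::real. \<epsilon> > 0 \<longrightarrow>
        (\<exists>N. \<forall>m\<ge>N. \<forall>n\<ge>N. vabs (x m - x n) \<le> \<epsilon> *\<^sub>R e)))"

definition ru_complete :: "'a::{ordered_real_vector, lattice} itself \<Rightarrow> bool" where
  "ru_complete _ \<longleftrightarrow> (\<forall>x :: nat \<Rightarrow> 'a. ru_cauchy x \<longrightarrow> (\<exists>l. ru_converges x l))"

definition f_algebra :: "'a::{real_algebra, ordered_real_vector, lattice} itself \<Rightarrow> bool" where
  "f_algebra _ \<longleftrightarrow>
     (\<forall>a b :: 'a. 0 \<le> a \<and> 0 \<le> b \<longrightarrow> 0 \<le> a * b) \<and>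
     (\<forall>a b c :: 'a. inf a b = 0 \<and> 0 \<le> c \<longrightarrow> inf (a * c) b = 0 \<and> inf (c * a) b = 0)"

text \<open>Positive powers in a possibly non-unital ring: npow a n = a^(n+1).\<close>
fun npow :: "'a::semigroup_mult \<Rightarrow> nat \<Rightarrow> 'a" where
  "npow a 0 = a"
| "npow a (Suc n) = a * npow a n"

definition semiprime :: "'a::{ring} itself \<Rightarrow> bool" where
  "semiprime _ \<longleftrightarrow> (\<forall>a :: 'a. (\<exists>n. npow a n = 0) \<longrightarrow> a = 0)"

end

theory Submission
  imports Defs "HOL-Library.Lattice_Algebras"
begin

interpretation LA: lattice_ab_group_add "(+)" "0::'a::{ordered_real_vector,lattice}" "(-)" uminus "(\<le>)" "(<)" inf sup
  by unfold_locales


context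
  fixes dummy :: "'a::{ordered_real_vector,lattice}"
begin

lemma inf_diff: "inf x y - z = inf (x - z) (y - (z::'a))"
  using LA.add_inf_distrib_right[of x y "-z"] by simp

lemma sup_diff: "sup x y - z = sup (x - z) (y - (z::'a))"
  using LA.add_sup_distrib_right[of x y "-z"] by simp

lemma prt_decomp: "sup x 0 - sup (-x) 0 = (x::'a)"
proof -
  have "sup (-x) 0 = - inf x 0" using LA.neg_inf_eq_sup[of x 0] by simp
  then show ?thesis using LA.add_eq_inf_sup[of x 0] by (simp add: algebra_simps)
qed

lemma prt_disj: "inf (sup x 0) (sup (-x) 0) = (0::'a)"
proof -
  have "inf (sup x 0) (sup (-x) 0) - sup (-x) 0 = inf (sup x 0 - sup (-x) 0) 0"
    using inf_diff[of "sup x 0" "sup (-x) 0" "sup (-x) 0"] by simp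
  also have "\<dots> = inf x 0" by (simp only: prt_decomp)
  also have "\<dots> = - sup (-x) 0" using LA.neg_inf_eq_sup[of x 0] by simp
  finally show ?thesis by (simp add: algebra_simps)
qed

lemma vabs_prts: "vabs x = sup x 0 + sup (-x) (0::'a)"
proof -
  have "sup x 0 + sup (-x) 0 = sup (x + sup (-x) 0) (sup (-x) 0)"
    using LA.add_sup_distrib_right[of x 0 "sup (-x) 0"] by simp
  also have "x + sup (-x) 0 = sup 0 x" using LA.add_sup_distrib_left[of x "-x" 0] by simp
  finally have "sup x 0 + sup (-x) 0 = sup (sup 0 x) (sup (-x) 0)" .
  also have "\<dots> = sup 0 (sup x (-x))" by (simp add: sup_aci)
  also have "\<dots> = sup x (-x)"
  proof -
    have "x + (-x) \<le> sup x (-x) + sup x (-x)" by (rule add_mono) simp_all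
    then have "0 \<le> sup x (-x)" using LA.zero_le_double_add_iff_zero_le_single_add by simp
    then show ?thesis by (simp add: sup.absorb2)
  qed
  finally show ?thesis by (simp add: vabs_def)
qed

lemma disj_nonneg: "inf x y = (0::'a) \<Longrightarrow> 0 \<le> x \<and> 0 \<le> y"
  by (metis inf.cobounded1 inf.cobounded2)

lemma disj_add: 
  assumes "0 \<le> x" "0 \<le> y" "0 \<le> (z::'a)" "inf x y = 0" "inf x z = 0"
  shows "inf x (y + z) = 0"
proof -
  let ?m = "inf x (y + z)"
  have m0: "0 \<le> ?m" using assms by (simp add: add_nonneg_nonneg)
  have "?m - y \<le> z" using inf.cobounded2[of x "y+z"] by (simp add: algebra_simps)
  moreover have "?m - y \<le> x"
  proof -
    have "?m \<le> x + y" using add_increasing2[OF assms(2) inf.cobounded1[of x "y+z"]] .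
    then show ?thesis by (simp add: diff_le_eq)
  qed
  ultimately have "?m - y \<le> inf x z" by simp
  then have "?m \<le> y" using assms by simp
  then have "?m \<le> inf x y" by simp
  then show ?thesis using m0 assms by simp
qed

lemma disj_diff:
  assumes "inf A B = (0::'a)"
  shows "sup (A - B) 0 = A" "sup (B - A) 0 = B" "vabs (A - B) = A + B"
proof -
  have "sup (A - B) 0 = sup A B - B" using sup_diff[of A B B] by simp
  also have "\<dots> = A" using LA.add_eq_inf_sup[of A B] assms by (metis add.right_neutral add_diff_cancel)
  finally show 1: "sup (A - B) 0 = A" .
  have "sup (B - A) 0 = sup B A - A" using sup_diff[of B A A] by simp
  also have "\<dots> = B" using LA.add_eq_inf_sup[of A B] assms
    by (metis add.commute add.right_neutral add_diff_cancel sup.commute)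
  finally show 2: "sup (B - A) 0 = B" .
  show "vabs (A - B) = A + B" using 1 2 by (simp add: vabs_prts)
qed

lemma vabs_nonneg: "0 \<le> vabs (x::'a)"
  by (simp add: vabs_prts add_nonneg_nonneg)

lemma vabs_le_iff: "vabs (x::'a) \<le> y \<longleftrightarrow> x \<le> y \<and> - x \<le> y"
  by (simp add: vabs_def)

lemma vabs_ge: "(x::'a) \<le> vabs x" "- x \<le> vabs x"
  by (simp_all add: vabs_def)

lemma vabs_minus: "vabs (- x) = vabs (x::'a)"
  by (simp add: vabs_def sup.commute)

lemma vabs_diff_commute: "vabs (x - y) = vabs (y - (x::'a))"
  using vabs_minus[of "x - y"] by simp

lemma vabs_triangle: "vabs (x + y) \<le> vabs x + vabs (y::'a)"
  unfolding vabs_le_iff using vabs_ge[of x] vabs_ge[of y]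
  using add_mono[OF vabs_ge(2)[of x] vabs_ge(2)[of y]] add_mono[OF vabs_ge(1)[of x] vabs_ge(1)[of y]]
  by (simp add: add.commute)

lemma vabs_of_nonneg: "0 \<le> (x::'a) \<Longrightarrow> vabs x = x"
  by (simp add: vabs_prts sup.absorb1 sup.absorb2)

lemma vabs_zero_iff: "vabs (x::'a) = 0 \<longleftrightarrow> x = 0"
  by (simp add: vabs_def)

lemma scaleR_inf: 
  assumes "0 < K" shows "K *\<^sub>R inf x y = inf (K *\<^sub>R x) (K *\<^sub>R (y::'a))"
proof (rule antisym)
  show "K *\<^sub>R inf x y \<le> inf (K *\<^sub>R x) (K *\<^sub>R y)"
    using assms by (simp add: scaleR_left_mono)
  have "inverse K *\<^sub>R inf (K *\<^sub>R x) (K *\<^sub>R y) \<le> inverse K *\<^sub>R (K *\<^sub>R x)"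
    using assms by (intro scaleR_left_mono) simp_all
  moreover have "inverse K *\<^sub>R inf (K *\<^sub>R x) (K *\<^sub>R y) \<le> inverse K *\<^sub>R (K *\<^sub>R y)"
    using assms by (intro scaleR_left_mono) simp_all
  moreover have "inverse K *\<^sub>R (K *\<^sub>R x) = x" "inverse K *\<^sub>R (K *\<^sub>R y) = y"
    using assms by simp_all
  ultimately have "inverse K *\<^sub>R inf (K *\<^sub>R x) (K *\<^sub>R y) \<le> inf x y"
    by (metis le_inf_iff)
  then have "K *\<^sub>R (inverse K *\<^sub>R inf (K *\<^sub>R x) (K *\<^sub>R y)) \<le> K *\<^sub>R inf x y"
    using scaleR_left_mono[OF _ less_imp_le[OF assms]] by blast
  then show "inf (K *\<^sub>R x) (K *\<^sub>R y) \<le> K *\<^sub>R inf x y" using assms by simp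
qed

lemma disj_scale:
  assumes "0 \<le> K" "inf x y = (0::'a)"
  shows "inf x (K *\<^sub>R y) = 0"
proof (cases "K \<le> 1")
  case True
  have x0: "0 \<le> x" and y0: "0 \<le> y" using disj_nonneg[OF assms(2)] by auto
  have "K *\<^sub>R y \<le> 1 *\<^sub>R y" using True y0 by (rule scaleR_right_mono)
  then have "inf x (K *\<^sub>R y) \<le> inf x y" by (simp add: le_infI2)
  moreover have "0 \<le> inf x (K *\<^sub>R y)" using x0 y0 assms(1) by (simp add: scaleR_nonneg_nonneg)
  ultimately show ?thesis using assms(2) by simp
next
  case False
  have x0: "0 \<le> x" and y0: "0 \<le> y" using disj_nonneg[OF assms(2)] by auto
  have "1 *\<^sub>R x \<le> K *\<^sub>R x" using False x0 by (intro scaleR_right_mono) auto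
  then have "inf x (K *\<^sub>R y) \<le> inf (K *\<^sub>R x) (K *\<^sub>R y)" by (simp add: le_infI1)
  also have "\<dots> = K *\<^sub>R inf x y" using False by (simp add: scaleR_inf)
  finally have "inf x (K *\<^sub>R y) \<le> 0" using assms by simp
  moreover have "0 \<le> inf x (K *\<^sub>R y)" using x0 y0 assms(1) by (simp add: scaleR_nonneg_nonneg)
  ultimately show ?thesis by simp
qed

end

lemma archimedean_zero:
  assumes A: "archimedean_vl TYPE('a::{ordered_real_vector,lattice})"
    and D: "\<And>\<delta>. \<delta> > 0 \<Longrightarrow> vabs (d::'a) \<le> \<delta> *\<^sub>R E"
  shows "d = 0"
proof -
  have E0: "0 \<le> E" using D[of 1] vabs_nonneg[of d] by simp
  have "\<forall>n::nat. real n *\<^sub>R vabs d \<le> E"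
  proof
    fix n :: nat
    show "real n *\<^sub>R vabs d \<le> E"
    proof (cases "n = 0")
      case True then show ?thesis using E0 by simp
    next
      case False
      then have "vabs d \<le> (1 / real n) *\<^sub>R E" using D[of "1 / real n"] by simp
      then have "real n *\<^sub>R vabs d \<le> real n *\<^sub>R ((1 / real n) *\<^sub>R E)"
        by (rule scaleR_left_mono) simp
      then show ?thesis using False by simp
    qed
  qed
  then have "vabs d = 0" using A E0 vabs_nonneg[of d] unfolding archimedean_vl_def by blast
  then show ?thesis by (simp add: vabs_zero_iff)
qed


context
  assumes FA: "f_algebra TYPE('a::{real_algebra, ordered_real_vector, lattice})"
begin

lemma F0: "0 \<le> a \<Longrightarrow> 0 \<le> b \<Longrightarrow> 0 \<le> (a::'a) * b"
  using FA unfolding f_algebra_def by blast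

lemma Fax: "inf a b = 0 \<Longrightarrow> 0 \<le> c \<Longrightarrow> inf (a * c) b = 0 \<and> inf (c * a) (b::'a) = 0"
  using FA unfolding f_algebra_def by blast

lemma F0m: assumes "0 \<le> c" "x \<le> (y::'a)" shows "c * x \<le> c * y" "x * c \<le> y * c"
proof -
  have "0 \<le> c * (y - x)" "0 \<le> (y - x) * c" using assms by (simp_all add: F0)
  then show "c * x \<le> c * y" "x * c \<le> y * c" by (simp_all add: algebra_simps)
qed

lemma F1: assumes "inf x y = (0::'a)" shows "x * y = 0" "y * x = 0"
proof -
  have x0: "0 \<le> x" and y0: "0 \<le> y" using disj_nonneg[OF assms] by auto
  have "inf y x = 0" using assms by (simp add: inf.commute)
  then have "inf (x * y) x = 0" using Fax[of y x x] x0 by simp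
  then have "inf x (x * y) = 0" by (simp add: inf.commute)
  then have "inf (x * y) (x * y) = 0" using Fax[of x "x*y" y] y0 by simp
  then show "x * y = 0" by simp
  have "inf (y * x) y = 0" using Fax[of x y y] assms y0 by simp
  then have "inf y (y * x) = 0" by (simp add: inf.commute)
  then have "inf (y * x) (y * x) = 0" using Fax[of y "y*x" x] x0 by simp
  then show "y * x = 0" by simp
qed

lemma F2: assumes c0: "0 \<le> (c::'a)"
  shows "c * inf x y = inf (c * x) (c * y)" "inf x y * c = inf (x * c) (y * c)"
proof -
  obtain z where z: "z = inf x y" by blast
  have d: "inf (x - z) (y - z) = 0" using inf_diff[of x y z] z by simp
  then have "inf (c * (x - z)) (y - z) = 0" "inf ((x - z) * c) (y - z) = 0"
    using Fax c0 by blast+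
  then have "inf (y - z) (c * (x - z)) = 0" "inf (y - z) ((x - z) * c) = 0"
    by (simp_all add: inf.commute)
  then have "inf (c * (y - z)) (c * (x - z)) = 0" "inf ((y - z) * c) ((x - z) * c) = 0"
    using Fax c0 by blast+
  moreover have "c * (y - z) = c * y - c * z" "c * (x - z) = c * x - c * z"
    "(y - z) * c = y * c - z * c" "(x - z) * c = x * c - z * c"
    by (simp_all add: algebra_simps)
  ultimately have "inf (c * x - c * z) (c * y - c * z) = 0" "inf (x * c - z * c) (y * c - z * c) = 0"
    by (simp_all add: inf.commute)
  then have "inf (c * x) (c * y) - c * z = 0" "inf (x * c) (y * c) - z * c = 0"
    using inf_diff by metis+
  then show "c * inf x y = inf (c * x) (c * y)" "inf x y * c = inf (x * c) (y * c)"
    using z by simp_all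
qed

lemma F2p: assumes c0: "0 \<le> (c::'a)"
  shows "c * sup x 0 = sup (c * x) 0" "sup x 0 * c = sup (x * c) 0"
proof -
  have e: "sup z 0 = z - inf z 0" for z :: 'a using LA.add_eq_inf_sup[of z 0]
    by (metis add.right_neutral add_diff_cancel)
  obtain m where m: "m = inf x 0" by blast
  have "c * (x - m) = c * x - c * m" "(x - m) * c = x * c - m * c" by (simp_all add: algebra_simps)
  moreover have "c * m = inf (c * x) 0" "m * c = inf (x * c) 0" using F2[OF c0, of x 0] m by simp_all
  ultimately show "c * sup x 0 = sup (c * x) 0" "sup x 0 * c = sup (x * c) 0"
    using e[of x] e[of "c * x"] e[of "x * c"] m by simp_all
qed

lemma F3: "a * a = sup a 0 * sup a 0 + sup (-a) 0 * sup (-a) (0::'a)"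
  "vabs a * vabs a = a * a" "0 \<le> a * a"
proof -
  obtain p n where p: "p = sup a 0" and n: "n = sup (-a) 0" by blast
  have pn: "p * n = 0" "n * p = 0" using F1[OF prt_disj[of a]] p n by auto
  have a: "a = p - n" using prt_decomp[of a] p n by simp
  have "a * a = (p - n) * (p - n)" using a by simp
  also have "\<dots> = p * p + n * n" using pn by (simp add: algebra_simps)
  finally show 1: "a * a = sup a 0 * sup a 0 + sup (-a) 0 * sup (-a) (0::'a)" using p n by simp
  have "vabs a * vabs a = (p + n) * (p + n)" by (simp add: vabs_prts p n)
  also have "\<dots> = p * p + n * n" using pn by (simp add: algebra_simps)
  finally show "vabs a * vabs a = a * a" using 1 p n by simp
  have "0 \<le> p * p + n * n" using p n by (simp add: F0 add_nonneg_nonneg)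
  then show "0 \<le> a * a" using 1 p n by simp
qed

lemma F4: assumes "0 \<le> (c::'a)" shows "vabs (c * y) \<le> c * vabs y" "vabs (y * c) \<le> vabs y * c"
proof -
  have "c * y \<le> c * vabs y" "c * (- y) \<le> c * vabs y" using F0m(1)[OF assms] vabs_ge by blast+
  then show "vabs (c * y) \<le> c * vabs y" by (simp add: vabs_le_iff)
  have "y * c \<le> vabs y * c" "(- y) * c \<le> vabs y * c" using F0m(2)[OF assms] vabs_ge by blast+
  then show "vabs (y * c) \<le> vabs y * c" by (simp add: vabs_le_iff)
qed

lemma F5: assumes q0: "0 \<le> (q::'a)" shows "vabs y \<le> vabs (y + q * y)"
proof -
  let ?p = "sup y 0" and ?n = "sup (-y) 0"
  have p0: "0 \<le> ?p" and n0: "0 \<le> ?n" by simp_all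
  have d1: "inf ?p ?n = 0" by (rule prt_disj)
  have d2: "inf (q * ?p) ?n = 0" using Fax[OF d1 q0] by blast
  have d1': "inf ?n ?p = 0" using d1 by (simp add: inf.commute)
  have d3: "inf (q * ?n) ?p = 0" using Fax[OF d1' q0] by blast
  have d2': "inf ?n (q * ?p) = 0" using d2 by (simp add: inf.commute)
  have d4: "inf (q * ?n) (q * ?p) = 0" using Fax[OF d2' q0] by blast
  have qp0: "0 \<le> q * ?p" and qn0: "0 \<le> q * ?n" using q0 by (simp_all add: F0)
  have e1: "inf ?n (?p + q * ?p) = 0" using disj_add[OF n0 p0 qp0 d1' d2'] .
  have e2: "inf (q * ?n) (?p + q * ?p) = 0"
    using disj_add[OF qn0 p0 qp0 d3 d4] .
  have e1': "inf (?p + q * ?p) ?n = 0" using e1 by (simp add: inf.commute)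
  have e2': "inf (?p + q * ?p) (q * ?n) = 0" using e2 by (simp add: inf.commute)
  have e: "inf (?p + q * ?p) (?n + q * ?n) = 0"
    using disj_add[OF add_nonneg_nonneg[OF p0 qp0] n0 qn0 e1' e2'] .
  have "y + q * y = (?p + q * ?p) - (?n + q * ?n)"
    using prt_decomp[of y] by (metis add_diff_add right_diff_distrib)
  then have "vabs (y + q * y) = (?p + q * ?p) + (?n + q * ?n)" using disj_diff(3)[OF e] by simp
  moreover have "vabs y = ?p + ?n" by (simp add: vabs_prts)
  moreover have "?p + ?n \<le> (?p + q * ?p) + (?n + q * ?n)"
    using qp0 qn0 by (intro add_mono) simp_all
  ultimately show ?thesis by simp
qed

end

lemma S1:
  assumes SP: "semiprime TYPE('a::{real_algebra, ordered_real_vector, lattice})"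
    and FA: "f_algebra TYPE('a)"
    and "0 \<le> x" "0 \<le> y" "x * y = (0::'a)"
  shows "inf x y = 0"
proof -
  let ?m = "inf x y"
  have m0: "0 \<le> ?m" using assms by simp
  have "?m * ?m \<le> x * ?m" using F0m(2)[OF FA m0, of ?m x] by simp
  also have "\<dots> \<le> x * y" using F0m(1)[OF FA assms(3), of ?m y] by simp
  finally have "?m * ?m \<le> 0" using assms by simp
  moreover have "0 \<le> ?m * ?m" using F0[OF FA m0 m0] .
  ultimately have "npow ?m 1 = 0" by simp
  then show ?thesis using SP unfolding semiprime_def by blast
qed


lemma stepA:
  assumes FA: "f_algebra TYPE('a::{real_algebra, ordered_real_vector, lattice})"
    and SP: "semiprime TYPE('a)"
    and H: "vabs a \<le> vabs (a * a - a)"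
  shows "vabs a \<le> a * a - (a::'a)"
proof -
  obtain w where w: "w = a * a - a" by blast
  obtain ap an where ap: "ap = sup a 0" and an: "an = sup (-a) 0" by blast
  obtain wp y where wp: "wp = sup w 0" and y: "y = sup (-w) 0" by blast
  have a_dec: "a = ap - an" using prt_decomp[of a] ap an by simp
  have va: "vabs a = ap + an" using vabs_prts[of a] ap an by simp
  have apan: "inf ap an = 0" using prt_disj[of a] ap an by simp
  have w_dec: "w = wp - y" using prt_decomp[of w] wp y by simp
  have vw: "vabs w = wp + y" using vabs_prts[of w] wp y by simp
  have wpy: "inf wp y = 0" using prt_disj[of w] wp y by simp
  have y0: "0 \<le> y" and ap0: "0 \<le> ap" and an0: "0 \<le> an" and wp0: "0 \<le> wp"
    using y ap an wp by simp_all
  have H': "vabs a \<le> wp + y" using H w vw by simp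
  have aa0: "0 \<le> a * a" using F3(3)[OF FA] .
  have "- w \<le> a" using w aa0 by simp
  then have "y \<le> ap" using y ap by (simp add: le_supI1)
  then have "inf y an \<le> inf ap an" by (simp add: le_infI1)
  then have yan: "inf y an = 0" using apan y0 an0
    by (metis antisym inf_greatest)
  have yan0: "y * an = 0" using F1(1)[OF FA yan] .
  have ywp0: "y * wp = 0" using F1(2)[OF FA wpy] .
  have "y * vabs a = y * ap" using va yan0 by (simp add: algebra_simps)
  moreover have "y * (ap - an) = y * ap" using yan0 by (simp add: right_diff_distrib)
  then have "y * a = y * ap" using a_dec by metis
  ultimately have yva: "y * vabs a = y * a" by simp
  have "y * vabs a \<le> y * (wp + y)" using F0m(1)[OF FA y0 H'] .
  then have le1: "y * vabs a \<le> y * y" using ywp0 by (simp add: algebra_simps)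
  have "y * (wp - y) = - (y * y)" using ywp0 by (simp add: right_diff_distrib)
  then have "y * w = - (y * y)" using w_dec by metis
  moreover have "y * w = y * (a * a) - y * a" unfolding w by (rule right_diff_distrib)
  ultimately have "y * (a * a) = y * a - y * y" by (simp add: algebra_simps)
  then have "y * (a * a) \<le> 0" using le1 yva by simp
  moreover have "0 \<le> y * (a * a)" using F0[OF FA y0 aa0] .
  ultimately have yaa: "y * (a * a) = 0" by simp
  have vaa: "vabs a * vabs a = a * a" using F3(2)[OF FA] .
  have va0: "0 \<le> vabs a" by (rule vabs_nonneg)
  have yle: "y \<le> vabs a" using \<open>y \<le> ap\<close> va an0 by (simp add: add_increasing2)
  have "y * y \<le> y * vabs a" using F0m(1)[OF FA y0 yle] .
  then have "y * (y * y) \<le> y * (y * vabs a)" using F0m(1)[OF FA y0] by blast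
  also have "y * vabs a \<le> vabs a * vabs a" using F0m(2)[OF FA va0 yle] .
  then have "y * (y * vabs a) \<le> y * (vabs a * vabs a)"
    using F0m(1)[OF FA y0] by blast
  also have "\<dots> = 0" using yaa vaa by simp
  finally have "y * (y * y) \<le> 0" .
  moreover have "0 \<le> y * (y * y)" using y0 by (simp add: F0[OF FA])
  ultimately have "npow y 2 = 0" by (simp add: numeral_2_eq_2)
  then have "y = 0" using SP unfolding semiprime_def by blast
  then have "vabs w = w" using w_dec vw by simp
  then show ?thesis using H w by simp
qed

lemma stepC:
  fixes a x :: "'a::{real_algebra, ordered_real_vector, lattice}"
  assumes hx: "x + (a * a - a - a) * x = a * a - a - a"
  shows "a + ((a * a - a) - (a * a - a) * x) = a * ((a * a - a) - (a * a - a) * x)"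
proof -
  obtain q where q: "q = a * a - a - a" by blast
  have hx': "x + q * x = q" using hx q by simp
  have "a * (x + q * x) = a * q" using hx' by simp
  then have e: "a * x + a * (q * x) = a * q" by (simp add: algebra_simps)
  show ?thesis using e q by (simp add: algebra_simps)
qed


fun Wseq :: "'a::{real_algebra, ordered_real_vector, lattice} \<Rightarrow> real \<Rightarrow> nat \<Rightarrow> 'a" where
  "Wseq q v 0 = q"
| "Wseq q v (Suc k) = sup (v *\<^sub>R Wseq q v k - q * Wseq q v k) 0"

declare Wseq.simps(2)[simp del]

context
  fixes q :: "'a::{real_algebra, ordered_real_vector, lattice}" and v :: real
  assumes FA: "f_algebra TYPE('a)" and q0: "0 \<le> q" and v0: "0 \<le> v"
begin

lemma W_nonneg: "0 \<le> Wseq q v k"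
  by (cases k) (simp_all add: q0 Wseq.simps(2))

lemma W_comm: "q * Wseq q v k = Wseq q v k * q"
proof (induction k)
  case 0 then show ?case by simp
next
  case (Suc k)
  obtain W where W: "Wseq q v k = W" by blast
  have c: "q * W = W * q" using Suc W by simp
  have l: "q * (v *\<^sub>R W - q * W) = v *\<^sub>R (q * W) - q * (q * W)"
    by (simp add: right_diff_distrib)
  have r: "(v *\<^sub>R W - q * W) * q = v *\<^sub>R (W * q) - q * (W * q)"
    by (simp add: left_diff_distrib mult.assoc)
  have "q * (v *\<^sub>R W - q * W) = (v *\<^sub>R W - q * W) * q"
    using l r c by metis
  then show ?case using F2p[OF FA q0] W by (simp add: Wseq.simps(2))
qed

lemma W_le: "Wseq q v (Suc k) \<le> v *\<^sub>R Wseq q v k"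
proof -
  have "0 \<le> q * Wseq q v k" using F0[OF FA q0 W_nonneg] .
  moreover have "0 \<le> v *\<^sub>R Wseq q v k" using v0 W_nonneg by (simp add: scaleR_nonneg_nonneg)
  ultimately show ?thesis by (simp add: Wseq.simps(2))
qed

lemma W_bound: "Wseq q v k \<le> (v ^ k) *\<^sub>R q"
proof (induction k)
  case 0 then show ?case by simp
next
  case (Suc k)
  have "Wseq q v (Suc k) \<le> v *\<^sub>R Wseq q v k" by (rule W_le)
  also have "\<dots> \<le> v *\<^sub>R ((v ^ k) *\<^sub>R q)" using Suc v0 by (rule scaleR_left_mono)
  finally show ?case by simp
qed

lemma W_supp:
  assumes SP: "semiprime TYPE('a)"
  shows "q * Wseq q v (Suc k) \<le> v *\<^sub>R Wseq q v (Suc k)"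
proof -
  obtain V where V: "V = Wseq q v k" by blast
  obtain Y where Y: "Y = v *\<^sub>R V - q * V" by blast
  obtain P where P: "P = sup Y 0" by blast
  obtain Nn where Nn: "Nn = sup (-Y) 0" by blast
  have WS: "Wseq q v (Suc k) = P" using V Y P by (simp add: Wseq.simps(2))
  have V0: "0 \<le> V" using V W_nonneg by simp
  have P0: "0 \<le> P" using P by simp
  have Vc: "V * q = q * V" using W_comm V by simp
  have Ydec: "Y = P - Nn" using prt_decomp[of Y] P Nn by simp
  have NP: "Nn * P = 0" using F1(2)[OF FA prt_disj[of Y]] P Nn by simp
  have YP: "Y * P = P * P"
  proof -
    have "(P - Nn) * P = P * P" using NP by (simp add: left_diff_distrib)
    then show ?thesis using Ydec by simp
  qed
  obtain Z where Z: "Z = sup (q * P - v *\<^sub>R P) 0" by blast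
  have Z0: "0 \<le> Z" using Z by simp
  have "V * (q * P - v *\<^sub>R P) = (V * q) * P - v *\<^sub>R (V * P)"
    by (simp add: algebra_simps)
  also have "\<dots> = - (Y * P)"
  proof -
    have "Y * P = v *\<^sub>R (V * P) - (q * V) * P" unfolding Y by (simp add: left_diff_distrib)
    then show ?thesis using Vc by simp
  qed
  finally have VqP: "V * (q * P - v *\<^sub>R P) = - (P * P)" using YP by simp
  have "V * Z = sup (V * (q * P - v *\<^sub>R P)) 0" using F2p(1)[OF FA V0] Z by simp
  also have "\<dots> = 0" using VqP F0[OF FA P0 P0] by (simp add: sup.absorb2)
  finally have VZ: "V * Z = 0" .
  have "inf V Z = 0" using S1[OF SP FA V0 Z0 VZ] .
  then have "inf (q * V) Z = 0" using Fax[OF FA _ q0, of V Z] by blast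
  then have "inf Z (q * V) = 0" by (simp add: inf.commute)
  then have d: "inf Z (v *\<^sub>R (q * V)) = 0" using disj_scale[OF v0] by blast
  have "Z \<le> q * P"
  proof -
    have "0 \<le> v *\<^sub>R P" using v0 P0 by (simp add: scaleR_nonneg_nonneg)
    moreover have "0 \<le> q * P" using F0[OF FA q0 P0] .
    ultimately show ?thesis using Z by simp
  qed
  also have "P \<le> v *\<^sub>R V" using W_le V WS by metis
  then have "q * P \<le> q * (v *\<^sub>R V)" using F0m(1)[OF FA q0] by blast
  also have "q * (v *\<^sub>R V) = v *\<^sub>R (q * V)" by simp
  finally have "Z \<le> v *\<^sub>R (q * V)" .
  then have "Z = 0" using d by (simp add: inf.absorb1)
  then have "q * P - v *\<^sub>R P \<le> 0" using Z by (metis sup.cobounded1)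
  then show ?thesis using WS by simp
qed

lemma W_step:
  assumes SP: "semiprime TYPE('a)"
  shows "Wseq q v (Suc k) + q * Wseq q v (Suc k)
    = (v + 1) *\<^sub>R Wseq q v (Suc k) - Wseq q v (Suc (Suc k))"
proof -
  have "q * Wseq q v (Suc k) \<le> v *\<^sub>R Wseq q v (Suc k)" using W_supp[OF SP] by simp
  then have e: "Wseq q v (Suc (Suc k)) = v *\<^sub>R Wseq q v (Suc k) - q * Wseq q v (Suc k)"
    by (simp add: sup.absorb1 Wseq.simps(2)[of q v "Suc k"])
  show ?thesis unfolding e by (simp add: algebra_simps)
qed

lemma W_zero_step:
  "Wseq q v 0 + q * Wseq q v 0 = (v + 1) *\<^sub>R Wseq q v 0 - Wseq q v 1 + sup (q * q - v *\<^sub>R q) 0"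
proof -
  obtain A where A: "sup (v *\<^sub>R q - q * q) 0 = A" by blast
  obtain B where B: "sup (q * q - v *\<^sub>R q) 0 = B" by blast
  have "sup (v *\<^sub>R q - q * q) 0 - sup (- (v *\<^sub>R q - q * q)) 0 = v *\<^sub>R q - q * q"
    by (rule prt_decomp)
  then have e: "A - B = v *\<^sub>R q - q * q" using A B by (simp only: minus_diff_eq)
  have W1: "Wseq q v 1 = A" using A by (simp add: Wseq.simps(2))
  show ?thesis unfolding W1 B using e by (simp add: algebra_simps)
qed

end


definition Pseq :: "'a::{real_algebra, ordered_real_vector, lattice} \<Rightarrow> real \<Rightarrow> real \<Rightarrow> nat \<Rightarrow> 'a" where
  "Pseq q v c K = (\<Sum>k\<le>K. (c ^ (k + 1)) *\<^sub>R Wseq q v k)"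

lemma vabs_tri3: "vabs (a + b - c) \<le> vabs a + vabs b + vabs (c::'a::{ordered_real_vector,lattice})"
proof -
  have "vabs (a + b - c) \<le> vabs (a + b) + vabs (- c)" using vabs_triangle[of "a + b" "- c"] by simp
  also have "\<dots> \<le> vabs a + vabs b + vabs c" using vabs_triangle[of a b] vabs_minus[of c]
    by (simp add: add_right_mono)
  finally show ?thesis .
qed

lemma pow_c: fixes c v :: real assumes "c * (v + 1) = 1" shows "c ^ Suc n * (v + 1) = c ^ n"
proof -
  have "c ^ Suc n * (v + 1) = c ^ n * (c * (v + 1))" by (simp add: mult.assoc)
  then show ?thesis using assms by simp
qed

lemma pow_r: fixes c r :: real assumes "1 - c = r" shows "r ^ n - c * r ^ n = r ^ Suc n"
proof -
  have "r ^ n - c * r ^ n = (1 - c) * r ^ n" by (simp add: algebra_simps)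
  then show ?thesis using assms by simp
qed

context
  fixes q :: "'a::{real_algebra, ordered_real_vector, lattice}" and v c r :: real
  assumes FA: "f_algebra TYPE('a)" and SP: "semiprime TYPE('a)" and q0: "0 \<le> q" and v0: "0 \<le> v"
    and hc: "c * (v + 1) = 1" and hr: "1 - c = r" and hrv: "r = c * v" and c0: "0 \<le> c" and r0: "0 \<le> r"
begin

lemma P_id:
  "Pseq q v c K + q * Pseq q v c K = q + c *\<^sub>R sup (q * q - v *\<^sub>R q) 0
     - (c ^ (K + 1)) *\<^sub>R Wseq q v (Suc K)"
proof (induction K)
  case 0
  have "Pseq q v c 0 + q * Pseq q v c 0 = c *\<^sub>R (Wseq q v 0 + q * Wseq q v 0)"
    by (simp add: Pseq_def scaleR_add_right)
  also have "\<dots> = c *\<^sub>R ((v + 1) *\<^sub>R Wseq q v 0 - Wseq q v 1 + sup (q * q - v *\<^sub>R q) 0)"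
    using W_zero_step[OF FA q0 v0] by simp
  also have "\<dots> = (c * (v + 1)) *\<^sub>R Wseq q v 0 - c *\<^sub>R Wseq q v 1
      + c *\<^sub>R sup (q * q - v *\<^sub>R q) 0"
    by (simp only: scaleR_diff_right scaleR_add_right scaleR_scaleR)
  also have "\<dots> = q - c *\<^sub>R Wseq q v 1 + c *\<^sub>R sup (q * q - v *\<^sub>R q) 0"
    using hc by simp
  also have "\<dots> = q + c *\<^sub>R sup (q * q - v *\<^sub>R q) 0 - c *\<^sub>R Wseq q v 1"
    by (simp add: algebra_simps)
  finally show ?case by simp
next
  case (Suc K)
  obtain W where W: "Wseq q v (Suc K) = W" by blast
  obtain W' where W': "Wseq q v (Suc (Suc K)) = W'" by blast
  have PS: "Pseq q v c (Suc K) = Pseq q v c K + (c ^ (Suc K + 1)) *\<^sub>R W"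
    unfolding Pseq_def W[symmetric] by (simp only: sum.atMost_Suc)
  have "Pseq q v c (Suc K) + q * Pseq q v c (Suc K)
      = (Pseq q v c K + q * Pseq q v c K) + (c ^ (Suc K + 1)) *\<^sub>R (W + q * W)"
    unfolding PS by (simp add: algebra_simps)
  also have "W + q * W = (v + 1) *\<^sub>R W - W'"
    using W_step[OF FA q0 v0 SP, of K] W W' by simp
  also have "(c ^ (Suc K + 1)) *\<^sub>R ((v + 1) *\<^sub>R W - W')
     = (c ^ (K + 1)) *\<^sub>R W - (c ^ (Suc K + 1)) *\<^sub>R W'"
  proof -
    have e1: "c ^ (Suc K + 1) * (v + 1) = c ^ (K + 1)" using pow_c[OF hc, of "K + 1"] by simp
    show ?thesis by (simp only: scaleR_diff_right scaleR_scaleR e1)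
  qed
  finally show ?case using Suc.IH W W' by simp
qed

lemma term_bound: "(c ^ (k + 1)) *\<^sub>R Wseq q v k \<le> (c * r ^ k) *\<^sub>R q"
proof -
  have "(c ^ (k + 1)) *\<^sub>R Wseq q v k \<le> (c ^ (k + 1)) *\<^sub>R ((v ^ k) *\<^sub>R q)"
    using W_bound[OF FA q0 v0] c0 by (intro scaleR_left_mono) simp_all
  also have "c ^ (k + 1) * v ^ k = c * r ^ k"
    using hrv by (simp add: power_mult_distrib)
  then have "(c ^ (k + 1)) *\<^sub>R ((v ^ k) *\<^sub>R q) = (c * r ^ k) *\<^sub>R q"
    by (simp only: scaleR_scaleR)
  finally show ?thesis .
qed

lemma term_nonneg: "0 \<le> (c ^ (k + 1)) *\<^sub>R Wseq q v k"
  using W_nonneg[OF FA q0 v0] c0 by (simp add: scaleR_nonneg_nonneg)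

lemma P_diff:
  assumes "n \<le> m"
  shows "0 \<le> Pseq q v c m - Pseq q v c n \<and>
    Pseq q v c m - Pseq q v c n \<le> (r ^ (n + 1) - r ^ (m + 1)) *\<^sub>R q"
  using assms
proof (induction m rule: dec_induct)
  case base then show ?case by simp
next
  case (step m)
  obtain T where T: "(c ^ (Suc m + 1)) *\<^sub>R Wseq q v (Suc m) = T" by blast
  have PS: "Pseq q v c (Suc m) - Pseq q v c n = (Pseq q v c m - Pseq q v c n) + T"
    unfolding Pseq_def T[symmetric] by (simp only: sum.atMost_Suc) (simp add: algebra_simps)
  have t0: "0 \<le> T" using term_nonneg[of "Suc m"] T by simp
  have tb: "T \<le> (c * r ^ Suc m) *\<^sub>R q" using term_bound[of "Suc m"] T by simp
  have rr: "r ^ (n + 1) - r ^ (m + 1) + c * r ^ (Suc m) = r ^ (n + 1) - r ^ (Suc m + 1)"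
  proof -
    have "r ^ (m + 1) - c * r ^ (m + 1) = r ^ Suc (m + 1)" using pow_r[OF hr] .
    then show ?thesis by simp
  qed
  have "Pseq q v c (Suc m) - Pseq q v c n \<le>
     ((r ^ (n + 1) - r ^ (m + 1)) *\<^sub>R q) + (c * r ^ (Suc m)) *\<^sub>R q"
    unfolding PS using step.IH tb by (intro add_mono) auto
  also have "\<dots> = (r ^ (n + 1) - r ^ (Suc m + 1)) *\<^sub>R q"
    unfolding rr[symmetric] by (simp only: scaleR_add_left)
  finally have 2: "Pseq q v c (Suc m) - Pseq q v c n \<le> (r ^ (n + 1) - r ^ (Suc m + 1)) *\<^sub>R q" .
  have "0 \<le> Pseq q v c (Suc m) - Pseq q v c n" unfolding PS using step.IH t0 by (simp add: add_nonneg_nonneg)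
  then show ?case using 2 by blast
qed

lemma P_cauchy_bound:
  assumes "n \<le> m"
  shows "vabs (Pseq q v c m - Pseq q v c n) \<le> (r ^ (n + 1)) *\<^sub>R q"
proof -
  note h = P_diff[OF assms]
  have "(r ^ (n + 1) - r ^ (m + 1)) *\<^sub>R q \<le> (r ^ (n + 1)) *\<^sub>R q"
    using r0 q0 by (intro scaleR_right_mono) simp_all
  moreover have "vabs (Pseq q v c m - Pseq q v c n) = Pseq q v c m - Pseq q v c n"
    using h by (intro vabs_of_nonneg) blast
  ultimately show ?thesis using h by (metis order_trans)
qed

end


lemma inner:
  assumes FA: "f_algebra TYPE('a::{real_algebra, ordered_real_vector, lattice})"
    and SP: "semiprime TYPE('a)" and AR: "archimedean_vl TYPE('a)" and RC: "ru_complete TYPE('a)"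
    and q0: "0 \<le> (q::'a)" and v0: "0 \<le> v"
  shows "\<exists>X. X + q * X = q + (1 / (v + 1)) *\<^sub>R sup (q * q - v *\<^sub>R q) 0"
proof -
  obtain c where c: "c = 1 / (v + 1)" by blast
  obtain r where r: "r = v / (v + 1)" by blast
  have hc: "c * (v + 1) = 1" using c v0 by simp
  have hr: "1 - c = r" unfolding c r using v0 by (simp add: field_simps)
  have hrv: "r = c * v" using c r by simp
  have c0: "0 \<le> c" using c v0 by simp
  have r0: "0 \<le> r" using r v0 by simp
  have r1: "r < 1" using r v0 by simp
  have c1: "c \<le> 1" using c v0 by simp
  note L = P_cauchy_bound[OF FA SP q0 v0 hc hr hrv c0 r0]
  note PI = P_id[OF FA SP q0 v0 hc hr hrv c0 r0]
  note TB = term_bound[OF FA SP q0 v0 hc hr hrv c0 r0]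
  note TN = term_nonneg[OF FA SP q0 v0 hc hr hrv c0 r0]
  let ?P = "Pseq q v c"
  have rpow: "r ^ (n + 1) \<le> r ^ N" if "N \<le> n" for n N
    using that r0 r1 by (intro power_decreasing) simp_all
  have cau: "ru_cauchy ?P"
    unfolding ru_cauchy_def
  proof (rule exI[of _ q], intro conjI allI impI)
    show "0 \<le> q" by (rule q0)
    fix \<epsilon> :: real assume e: "0 < \<epsilon>"
    obtain N where N: "r ^ N < \<epsilon>" using real_arch_pow_inv[OF e r1] by blast
    show "\<exists>N. \<forall>m\<ge>N. \<forall>n\<ge>N. vabs (?P m - ?P n) \<le> \<epsilon> *\<^sub>R q"
    proof (intro exI allI impI)
      fix m n assume m: "N \<le> m" and n: "N \<le> n"
      show "vabs (?P m - ?P n) \<le> \<epsilon> *\<^sub>R q"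
      proof (cases "n \<le> m")
        case True
        have "vabs (?P m - ?P n) \<le> (r ^ (n + 1)) *\<^sub>R q" by (rule L[OF True])
        also have "\<dots> \<le> \<epsilon> *\<^sub>R q" using rpow[OF n] N q0 by (intro scaleR_right_mono) simp_all
        finally show ?thesis .
      next
        case False
        then have "m \<le> n" by simp
        have "vabs (?P m - ?P n) = vabs (?P n - ?P m)" by (rule vabs_diff_commute)
        also have "\<dots> \<le> (r ^ (m + 1)) *\<^sub>R q" by (rule L[OF \<open>m \<le> n\<close>])
        also have "\<dots> \<le> \<epsilon> *\<^sub>R q" using rpow[OF m] N q0 by (intro scaleR_right_mono) simp_all
        finally show ?thesis .
      qed
    qed
  qed
  then obtain X where "ru_converges ?P X" using RC unfolding ru_complete_def by blast
  then obtain e where e0: "0 \<le> e" and conv: "\<And>\<epsilon>. \<epsilon> > 0 \<Longrightarrow> \<exists>N. \<forall>n\<ge>N. vabs (?P n - X) \<le> \<epsilon> *\<^sub>R e"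
    unfolding ru_converges_def by blast
  obtain N0 where N0: "sup (q * q - v *\<^sub>R q) 0 = N0" by blast
  have "X + q * X - (q + c *\<^sub>R N0) = 0"
  proof (rule archimedean_zero[OF AR])
    fix \<delta> :: real assume d: "0 < \<delta>"
    obtain N1 where N1: "\<forall>n\<ge>N1. vabs (?P n - X) \<le> \<delta> *\<^sub>R e" using conv[OF d] by blast
    obtain N2 where N2: "r ^ N2 < \<delta>" using real_arch_pow_inv[OF d r1] by blast
    let ?K = "max N1 N2"
    obtain T where T: "(c ^ (?K + 1)) *\<^sub>R Wseq q v (Suc ?K) = T" by blast
    have idK: "?P ?K + q * ?P ?K = q + c *\<^sub>R N0 - T" using PI[of ?K] N0 T by simp
    have D: "X + q * X - (q + c *\<^sub>R N0) = (X - ?P ?K) + q * (X - ?P ?K) - T"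
      using idK by (simp add: algebra_simps)
    have b1: "vabs (X - ?P ?K) \<le> \<delta> *\<^sub>R e"
      using N1 vabs_diff_commute[of X "?P ?K"] by simp
    have "vabs (q * (X - ?P ?K)) \<le> q * vabs (X - ?P ?K)" by (rule F4(1)[OF FA q0])
    also have "\<dots> \<le> q * (\<delta> *\<^sub>R e)" using F0m(1)[OF FA q0 b1] .
    finally have b2: "vabs (q * (X - ?P ?K)) \<le> \<delta> *\<^sub>R (q * e)" by simp
    have WS0: "0 \<le> Wseq q v (Suc ?K)" by (rule W_nonneg[OF FA q0 v0])
    have T0: "0 \<le> T" using T c0 WS0 by (metis scaleR_nonneg_nonneg zero_le_power)
    have "T \<le> (c ^ (?K + 1)) *\<^sub>R ((v ^ Suc ?K) *\<^sub>R q)"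
      unfolding T[symmetric] using W_bound[OF FA q0 v0, of "Suc ?K"] c0
      by (intro scaleR_left_mono) simp_all
    also have "\<dots> = (r ^ Suc ?K) *\<^sub>R q"
    proof -
      have "c ^ (?K + 1) * v ^ Suc ?K = r ^ Suc ?K" using hrv by (simp add: power_mult_distrib)
      then show ?thesis by (simp only: scaleR_scaleR)
    qed
    also have "\<dots> \<le> \<delta> *\<^sub>R q"
    proof (rule scaleR_right_mono[OF _ q0])
      have "r ^ Suc ?K \<le> r ^ N2" using rpow[of N2 ?K] by simp
      then show "r ^ Suc ?K \<le> \<delta>" using N2 by simp
    qed
    finally have b3: "vabs T \<le> \<delta> *\<^sub>R q" using T0 by (simp add: vabs_of_nonneg)
    have "vabs (X + q * X - (q + c *\<^sub>R N0)) \<le> vabs (X - ?P ?K) + vabs (q * (X - ?P ?K)) + vabs T"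
      unfolding D by (rule vabs_tri3)
    also have "\<dots> \<le> \<delta> *\<^sub>R e + \<delta> *\<^sub>R (q * e) + \<delta> *\<^sub>R q"
      using b1 b2 b3 by (intro add_mono) simp_all
    also have "\<dots> = \<delta> *\<^sub>R (e + q * e + q)" by (simp add: scaleR_add_right)
    finally show "vabs (X + q * X - (q + c *\<^sub>R N0)) \<le> \<delta> *\<^sub>R (e + q * e + q)" .
  qed
  then show ?thesis using c N0 by auto
qed


lemma quasi_neg:
  assumes FA: "f_algebra TYPE('a::{real_algebra, ordered_real_vector, lattice})"
    and SP: "semiprime TYPE('a)" and AR: "archimedean_vl TYPE('a)" and RC: "ru_complete TYPE('a)"
    and q0: "0 \<le> (q::'a)"
  shows "\<exists>x. x + q * x = q"
proof -
  have qq0: "0 \<le> q * q" using F0[OF FA q0 q0] .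
  have ex: "\<exists>X. vabs (X + q * X - q) \<le> (1 / (real n + 2)) *\<^sub>R (q * q)" for n :: nat
  proof -
    have v0: "0 \<le> real n + 1" by simp
    obtain X where X: "X + q * X = q + (1 / (real n + 1 + 1)) *\<^sub>R sup (q * q - (real n + 1) *\<^sub>R q) 0"
      using inner[OF FA SP AR RC q0 v0] by blast
    obtain N0 where N0: "sup (q * q - (real n + 1) *\<^sub>R q) 0 = N0" by blast
    have N00: "0 \<le> N0" using N0 sup.cobounded2 by metis
    have "0 \<le> (real n + 1) *\<^sub>R q" using q0 by (simp add: scaleR_nonneg_nonneg)
    then have "q * q - (real n + 1) *\<^sub>R q \<le> q * q" by simp
    then have N0le: "N0 \<le> q * q" using N0 qq0 by (metis sup_least)
    have "X + q * X - q = (1 / (real n + 2)) *\<^sub>R N0" using X N0 by (simp add: add.commute)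
    moreover have "vabs ((1 / (real n + 2)) *\<^sub>R N0) = (1 / (real n + 2)) *\<^sub>R N0"
      using N00 by (intro vabs_of_nonneg) (simp add: scaleR_nonneg_nonneg)
    moreover have "(1 / (real n + 2)) *\<^sub>R N0 \<le> (1 / (real n + 2)) *\<^sub>R (q * q)"
      using N0le by (intro scaleR_left_mono) simp_all
    ultimately show ?thesis by metis
  qed
  then obtain Xs where Xs: "\<And>n. vabs (Xs n + q * Xs n - q) \<le> (1 / (real n + 2)) *\<^sub>R (q * q)"
    by metis
  have cmono: "1 / (real n + 2) \<le> 1 / (real N + 2)" if "N \<le> n" for n N :: nat
    using that by (simp add: frac_le)
  have smallN: "\<exists>N::nat. 1 / (real N + 2) < \<epsilon>" if pos: "0 < \<epsilon>" for \<epsilon> :: real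
  proof -
    obtain N where N: "inverse (real (Suc N)) < \<epsilon>" using reals_Archimedean[OF pos] by blast
    have "1 / (real N + 2) \<le> inverse (real (Suc N))" by (simp add: field_simps)
    then show ?thesis using N by (meson le_less_trans)
  qed
  have cau: "ru_cauchy Xs"
    unfolding ru_cauchy_def
  proof (rule exI[of _ "q * q"], intro conjI allI impI)
    show "0 \<le> q * q" by (rule qq0)
    fix \<epsilon> :: real assume e: "0 < \<epsilon>"
    obtain N where N: "1 / (real N + 2) < \<epsilon> / 2" using smallN[of "\<epsilon> / 2"] e by auto
    show "\<exists>N. \<forall>m\<ge>N. \<forall>n\<ge>N. vabs (Xs m - Xs n) \<le> \<epsilon> *\<^sub>R (q * q)"
    proof (intro exI allI impI)
      fix m n assume m: "N \<le> m" and n: "N \<le> n"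
      have "vabs (Xs m - Xs n) \<le> vabs ((Xs m - Xs n) + q * (Xs m - Xs n))" by (rule F5[OF FA q0])
      also have "(Xs m - Xs n) + q * (Xs m - Xs n) = (Xs m + q * Xs m - q) - (Xs n + q * Xs n - q)"
        by (simp add: algebra_simps)
      also have "vabs \<dots> \<le> vabs (Xs m + q * Xs m - q) + vabs (Xs n + q * Xs n - q)"
        using vabs_triangle[of "Xs m + q * Xs m - q" "- (Xs n + q * Xs n - q)"] vabs_minus
        by (metis diff_conv_add_uminus)
      also have "\<dots> \<le> (1 / (real m + 2)) *\<^sub>R (q * q) + (1 / (real n + 2)) *\<^sub>R (q * q)"
        by (rule add_mono[OF Xs Xs])
      also have "\<dots> = (1 / (real m + 2) + 1 / (real n + 2)) *\<^sub>R (q * q)" by (simp add: scaleR_add_left)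
      also have "\<dots> \<le> \<epsilon> *\<^sub>R (q * q)"
      proof (rule scaleR_right_mono[OF _ qq0])
        show "1 / (real m + 2) + 1 / (real n + 2) \<le> \<epsilon>"
          using cmono[OF m] cmono[OF n] N by linarith
      qed
      finally show "vabs (Xs m - Xs n) \<le> \<epsilon> *\<^sub>R (q * q)" .
    qed
  qed
  then obtain x where "ru_converges Xs x" using RC unfolding ru_complete_def by blast
  then obtain e where e0: "0 \<le> e" and conv: "\<And>\<epsilon>. \<epsilon> > 0 \<Longrightarrow> \<exists>N. \<forall>n\<ge>N. vabs (Xs n - x) \<le> \<epsilon> *\<^sub>R e"
    unfolding ru_converges_def by blast
  have "x + q * x - q = 0"
  proof (rule archimedean_zero[OF AR])
    fix \<delta> :: real assume d: "0 < \<delta>"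
    obtain N1 where N1: "\<forall>n\<ge>N1. vabs (Xs n - x) \<le> \<delta> *\<^sub>R e" using conv[OF d] by blast
    obtain N2 where N2: "1 / (real N2 + 2) < \<delta>" using smallN[OF d] by blast
    let ?K = "max N1 N2"
    have D: "x + q * x - q = (x - Xs ?K) + q * (x - Xs ?K) - (- (Xs ?K + q * Xs ?K - q))"
      by (simp add: algebra_simps)
    have b1: "vabs (x - Xs ?K) \<le> \<delta> *\<^sub>R e"
      using N1 vabs_diff_commute[of x "Xs ?K"] by simp
    have "vabs (q * (x - Xs ?K)) \<le> q * vabs (x - Xs ?K)" by (rule F4(1)[OF FA q0])
    also have "\<dots> \<le> q * (\<delta> *\<^sub>R e)" using F0m(1)[OF FA q0 b1] .
    finally have b2: "vabs (q * (x - Xs ?K)) \<le> \<delta> *\<^sub>R (q * e)" by simp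
    have "vabs (- (Xs ?K + q * Xs ?K - q)) \<le> (1 / (real ?K + 2)) *\<^sub>R (q * q)"
      using Xs[of ?K] vabs_minus by metis
    also have "\<dots> \<le> \<delta> *\<^sub>R (q * q)"
      using cmono[of N2 ?K] N2 qq0 by (intro scaleR_right_mono) simp_all
    finally have b3: "vabs (- (Xs ?K + q * Xs ?K - q)) \<le> \<delta> *\<^sub>R (q * q)" .
    have "vabs (x + q * x - q) \<le> vabs (x - Xs ?K) + vabs (q * (x - Xs ?K)) + vabs (- (Xs ?K + q * Xs ?K - q))"
      unfolding D by (rule vabs_tri3)
    also have "\<dots> \<le> \<delta> *\<^sub>R e + \<delta> *\<^sub>R (q * e) + \<delta> *\<^sub>R (q * q)"
      using b1 b2 b3 by (intro add_mono) simp_all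
    also have "\<dots> = \<delta> *\<^sub>R (e + q * e + q * q)" by (simp add: scaleR_add_right)
    finally show "vabs (x + q * x - q) \<le> \<delta> *\<^sub>R (e + q * e + q * q)" .
  qed
  then show ?thesis by auto
qed

theorem theorem3:
  assumes "f_algebra TYPE('a::{real_algebra, ordered_real_vector, lattice})"
    and "archimedean_vl TYPE('a)"
    and "semiprime TYPE('a)"
    and "ru_complete TYPE('a)"
  shows "\<forall>a :: 'a. vabs a \<le> vabs (a * a - a) \<longrightarrow> (\<exists>b :: 'a. a + b = a * b)"
proof (intro allI impI)
  fix a :: 'a
  assume H: "vabs a \<le> vabs (a * a - a)"
  have w: "vabs a \<le> a * a - a" using stepA[OF assms(1) assms(3) H] .
  have "a \<le> vabs a" by (rule vabs_ge(1))
  then have q0: "0 \<le> a * a - a - a" using w by simp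
  obtain x where x: "x + (a * a - a - a) * x = a * a - a - a"
    using quasi_neg[OF assms(1) assms(3) assms(2) assms(4) q0] by blast
  show "\<exists>b. a + b = a * b" using stepC[OF x] by blast
qed

end
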